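(* Let $\mathscr{C}$ be an extensive category and $T$ a singletonizable Grothendieck topology on $\mathscr{C}$. Then $\mathrm{Sing}(T)\sim T$.
   Context: A Grothendieck topology $T$ on $\mathscr{C}$ assigns to each object $X$ a set of families $(\pi_i:U_i\to X)_{i\in I}$ ("coverings") such that isomorphisms form singleton coverings, coverings of members of a covering compose to coverings, and coverings pull back (pullbacks existing) along arbitrary morphisms to coverings. A morphism is universal if its pullback along every morphism exists; $\pi:Y\to X$ is $T$-locally split if there is a covering $(\pi_i:U_i\to X)$ and $\rho_i:U_i\to Y$ with $\pi\circ\rho_i=\pi_i$. $T_1\prec T_2$ means every universal $T_1$-locally split morphism is $T_2$-locally split; $T_1\sim T_2$ means $T_1\prec T_2$ and $T_2\prec T_1$. A category is extensive if it has an initial object, existing binary coproducts are disjoint, and existing coproducts are stable under pullback (for any existing $\coprod_iU_i$ and $f:X\to\coprod_iU_i$, the pullbacks of the injections exist and $X$ is their coproduct). $T$ is singletonizable if for every covering $(\phi_i:U_i\to X)_{i\in I}$ the coproduct $\coprod_iU_i$ exists. $\mathrm{Sing}(T)$ is the Grothendieck topology (on extensive $\mathscr{C}$) whose coverings are the singleton families $(\phi:\coprod_iU_i\to X)$ with $\phi|_{U_i}=\phi_i$, for all $T$-coverings $(\phi_i:U_i\to X)_{i\in I}$. *)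

theory Defs
  imports Main
begin

record ('o, 'm) cat =
  Obj :: "'o set"
  Arr :: "'m set"
  Dom :: "'m \<Rightarrow> 'o"
  Cod :: "'m \<Rightarrow> 'o"
  Comp :: "'m \<Rightarrow> 'm \<Rightarrow> 'm"   (* Comp C g f = g o f, defined when Cod f = Dom g *)
  Id :: "'o \<Rightarrow> 'm"

definition hom :: "('o, 'm) cat \<Rightarrow> 'o \<Rightarrow> 'o \<Rightarrow> 'm set" where
  "hom C X Y = {f \<in> Arr C. Dom C f = X \<and> Cod C f = Y}"

definition category :: "('o, 'm) cat \<Rightarrow> bool" where
  "category C \<longleftrightarrow>
     (\<forall>f \<in> Arr C. Dom C f \<in> Obj C \<and> Cod C f \<in> Obj C) \<and>
     (\<forall>X \<in> Obj C. Id C X \<in> hom C X X) \<and>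
     (\<forall>f \<in> Arr C. \<forall>g \<in> Arr C. Cod C f = Dom C g \<longrightarrow>
         Comp C g f \<in> hom C (Dom C f) (Cod C g)) \<and>
     (\<forall>f \<in> Arr C. Comp C (Id C (Cod C f)) f = f \<and> Comp C f (Id C (Dom C f)) = f) \<and>
     (\<forall>f \<in> Arr C. \<forall>g \<in> Arr C. \<forall>h \<in> Arr C. Cod C f = Dom C g \<longrightarrow> Cod C g = Dom C h \<longrightarrow>
         Comp C h (Comp C g f) = Comp C (Comp C h g) f)"

definition iso :: "('o, 'm) cat \<Rightarrow> 'm \<Rightarrow> bool" where
  "iso C f \<longleftrightarrow> f \<in> Arr C \<and>
     (\<exists>g \<in> hom C (Cod C f) (Dom C f). Comp C g f = Id C (Dom C f) \<and> Comp C f g = Id C (Cod C f))"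

definition initial :: "('o, 'm) cat \<Rightarrow> 'o \<Rightarrow> bool" where
  "initial C Z \<longleftrightarrow> Z \<in> Obj C \<and> (\<forall>X \<in> Obj C. \<exists>!f. f \<in> hom C Z X)"

definition is_pullback :: "('o, 'm) cat \<Rightarrow> 'm \<Rightarrow> 'm \<Rightarrow> 'm \<Rightarrow> 'm \<Rightarrow> bool" where
  "is_pullback C f g p1 p2 \<longleftrightarrow>
     f \<in> Arr C \<and> g \<in> Arr C \<and> Cod C f = Cod C g \<and>
     p1 \<in> hom C (Dom C p1) (Dom C f) \<and> p2 \<in> hom C (Dom C p1) (Dom C g) \<and>
     Comp C f p1 = Comp C g p2 \<and>
     (\<forall>q1 \<in> Arr C. \<forall>q2 \<in> Arr C.
        Dom C q1 = Dom C q2 \<and> Cod C q1 = Dom C f \<and> Cod C q2 = Dom C g \<and>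
        Comp C f q1 = Comp C g q2 \<longrightarrow>
        (\<exists>!u. u \<in> hom C (Dom C q1) (Dom C p1) \<and> Comp C p1 u = q1 \<and> Comp C p2 u = q2))"

definition has_pullback :: "('o, 'm) cat \<Rightarrow> 'm \<Rightarrow> 'm \<Rightarrow> bool" where
  "has_pullback C f g \<longleftrightarrow> (\<exists>p1 p2. is_pullback C f g p1 p2)"

definition is_coproduct ::
  "('o, 'm) cat \<Rightarrow> 'k set \<Rightarrow> ('k \<Rightarrow> 'o) \<Rightarrow> 'o \<Rightarrow> ('k \<Rightarrow> 'm) \<Rightarrow> bool" where
  "is_coproduct C I U Cp \<iota> \<longleftrightarrow>
     Cp \<in> Obj C \<and> (\<forall>i \<in> I. \<iota> i \<in> hom C (U i) Cp) \<and>
     (\<forall>Z \<in> Obj C. \<forall>f. (\<forall>i \<in> I. f i \<in> hom C (U i) Z) \<longrightarrow>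
        (\<exists>!h. h \<in> hom C Cp Z \<and> (\<forall>i \<in> I. Comp C h (\<iota> i) = f i)))"

definition has_coproduct :: "('o, 'm) cat \<Rightarrow> 'k set \<Rightarrow> ('k \<Rightarrow> 'o) \<Rightarrow> bool" where
  "has_coproduct C I U \<longleftrightarrow> (\<exists>Cp \<iota>. is_coproduct C I U Cp \<iota>)"

definition disjoint_binary_coproducts :: "('o, 'm) cat \<Rightarrow> bool" where
  "disjoint_binary_coproducts C \<longleftrightarrow>
     (\<forall>U Cp \<iota>. is_coproduct C (UNIV :: bool set) U Cp \<iota> \<longrightarrow>
        has_pullback C (\<iota> True) (\<iota> False) \<and>
        (\<forall>p1 p2. is_pullback C (\<iota> True) (\<iota> False) p1 p2 \<longrightarrow> initial C (Dom C p1)))"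

definition stable_coproducts :: "('o, 'm) cat \<Rightarrow> 'k itself \<Rightarrow> bool" where
  "stable_coproducts C _ \<longleftrightarrow>
     (\<forall>(I :: 'k set) U Cp \<iota> f. is_coproduct C I U Cp \<iota> \<longrightarrow> f \<in> Arr C \<longrightarrow> Cod C f = Cp \<longrightarrow>
        (\<forall>i \<in> I. has_pullback C (\<iota> i) f) \<and>
        (\<forall>a b. (\<forall>i \<in> I. is_pullback C (\<iota> i) f (a i) (b i)) \<longrightarrow>
               is_coproduct C I (\<lambda>i. Dom C (b i)) (Dom C f) b))"

text \<open>Extensive category; coproducts are considered for all index sets of the type 'i
  (the index type of covering families) and for binary ones.\<close>
definition extensive :: "('o, 'm) cat \<Rightarrow> 'i itself \<Rightarrow> bool" where
  "extensive C ity \<longleftrightarrow> category C \<and> (\<exists>Z. initial C Z) \<and> disjoint_binary_coproducts C \<and>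
     stable_coproducts C TYPE(bool) \<and> stable_coproducts C ity"

text \<open>A family over X is a pair (I, \<phi>) of an index set and arrows \<phi> i : U_i -> X.
  A topology assigns to each object a set of families.\<close>
type_synonym ('i, 'o, 'm) topology = "'o \<Rightarrow> ('i set \<times> ('i \<Rightarrow> 'm)) set"

definition grothendieck_topology :: "('o, 'm) cat \<Rightarrow> ('i, 'o, 'm) topology \<Rightarrow> bool" where
  "grothendieck_topology C T \<longleftrightarrow>
     (\<forall>X \<in> Obj C. \<forall>(I, \<phi>) \<in> T X. \<forall>i \<in> I. \<phi> i \<in> Arr C \<and> Cod C (\<phi> i) = X) \<and>
     (\<forall>f j. iso C f \<longrightarrow> ({j}, \<lambda>_. f) \<in> T (Cod C f)) \<and>
     (\<forall>X \<in> Obj C. \<forall>(I, \<phi>) \<in> T X. \<forall>J \<psi>.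
        (\<forall>i \<in> I. (J i, \<psi> i) \<in> T (Dom C (\<phi> i))) \<longrightarrow>
        (\<exists>K \<chi> b. (K, \<chi>) \<in> T X \<and> bij_betw b K (Sigma I J) \<and>
            (\<forall>k \<in> K. \<chi> k = Comp C (\<phi> (fst (b k))) (\<psi> (fst (b k)) (snd (b k)))))) \<and>
     (\<forall>X \<in> Obj C. \<forall>(I, \<phi>) \<in> T X. \<forall>f \<in> Arr C. Cod C f = X \<longrightarrow>
        (\<forall>i \<in> I. has_pullback C (\<phi> i) f) \<and>
        (\<forall>a b. (\<forall>i \<in> I. is_pullback C (\<phi> i) f (a i) (b i)) \<longrightarrow> (I, b) \<in> T (Dom C f)))"

definition universal :: "('o, 'm) cat \<Rightarrow> 'm \<Rightarrow> bool" where
  "universal C \<pi> \<longleftrightarrow> \<pi> \<in> Arr C \<and>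
     (\<forall>g \<in> Arr C. Cod C g = Cod C \<pi> \<longrightarrow> has_pullback C \<pi> g)"

definition locally_split :: "('o, 'm) cat \<Rightarrow> ('i, 'o, 'm) topology \<Rightarrow> 'm \<Rightarrow> bool" where
  "locally_split C T \<pi> \<longleftrightarrow> \<pi> \<in> Arr C \<and>
     (\<exists>I \<phi> \<rho>. (I, \<phi>) \<in> T (Cod C \<pi>) \<and>
        (\<forall>i \<in> I. \<rho> i \<in> hom C (Dom C (\<phi> i)) (Dom C \<pi>) \<and> Comp C \<pi> (\<rho> i) = \<phi> i))"

definition refines :: "('o, 'm) cat \<Rightarrow> ('i, 'o, 'm) topology \<Rightarrow> ('j, 'o, 'm) topology \<Rightarrow> bool" where
  "refines C T1 T2 \<longleftrightarrow>
     (\<forall>\<pi>. universal C \<pi> \<and> locally_split C T1 \<pi> \<longrightarrow> locally_split C T2 \<pi>)"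

definition top_equiv :: "('o, 'm) cat \<Rightarrow> ('i, 'o, 'm) topology \<Rightarrow> ('j, 'o, 'm) topology \<Rightarrow> bool" where
  "top_equiv C T1 T2 \<longleftrightarrow> refines C T1 T2 \<and> refines C T2 T1"

definition singletonizable :: "('o, 'm) cat \<Rightarrow> ('i, 'o, 'm) topology \<Rightarrow> bool" where
  "singletonizable C T \<longleftrightarrow>
     (\<forall>X \<in> Obj C. \<forall>(I, \<phi>) \<in> T X. has_coproduct C I (\<lambda>i. Dom C (\<phi> i)))"

definition Sing :: "('o, 'm) cat \<Rightarrow> ('i, 'o, 'm) topology \<Rightarrow> ('i, 'o, 'm) topology" where
  "Sing C T X = {({j}, \<lambda>_. \<phi>) | j \<phi>. \<exists>I \<phi>s Cp \<iota>. (I, \<phi>s) \<in> T X \<and>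
       is_coproduct C I (\<lambda>i. Dom C (\<phi>s i)) Cp \<iota> \<and> \<phi> \<in> hom C Cp X \<and>
       (\<forall>i \<in> I. Comp C \<phi> (\<iota> i) = \<phi>s i)}"

end

theory Submission
  imports Defs
begin

lemma comp_hom:
  assumes "category C" "f \<in> hom C X Y" "g \<in> hom C Y Z"
  shows "Comp C g f \<in> hom C X Z"
  using assms unfolding category_def hom_def by auto

lemma comp_assoc:
  assumes "category C" "f \<in> hom C X Y" "g \<in> hom C Y Z" "h \<in> hom C Z W"
  shows "Comp C h (Comp C g f) = Comp C (Comp C h g) f"
  using assms unfolding category_def hom_def by auto

lemma ref1:
  assumes cat: "category C"
  shows "refines C (Sing C T) T"
  unfolding refines_def
proof (intro allI impI)
  fix \<pi> assume "universal C \<pi> \<and> locally_split C (Sing C T) \<pi>"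
  then have pa: "\<pi> \<in> Arr C" and ls: "locally_split C (Sing C T) \<pi>"
    unfolding universal_def by auto
  from ls obtain I \<phi> \<rho> where c: "(I, \<phi>) \<in> Sing C T (Cod C \<pi>)" and
    r: "\<forall>i \<in> I. \<rho> i \<in> hom C (Dom C (\<phi> i)) (Dom C \<pi>) \<and> Comp C \<pi> (\<rho> i) = \<phi> i"
    unfolding locally_split_def by blast
  from c obtain j \<phi>0 I' \<phi>s Cp \<iota> where e: "I = {j}" "\<phi> = (\<lambda>_. \<phi>0)"
    and tc: "(I', \<phi>s) \<in> T (Cod C \<pi>)"
    and cp: "is_coproduct C I' (\<lambda>i. Dom C (\<phi>s i)) Cp \<iota>"
    and ph: "\<phi>0 \<in> hom C Cp (Cod C \<pi>)"
    and phi: "\<forall>i \<in> I'. Comp C \<phi>0 (\<iota> i) = \<phi>s i"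
    unfolding Sing_def by blast
  have rj: "\<rho> j \<in> hom C Cp (Dom C \<pi>)" "Comp C \<pi> (\<rho> j) = \<phi>0"
    using r e ph unfolding hom_def by auto
  have pih: "\<pi> \<in> hom C (Dom C \<pi>) (Cod C \<pi>)" using pa unfolding hom_def by auto
  show "locally_split C T \<pi>"
    unfolding locally_split_def
  proof (intro conjI exI)
    show "\<pi> \<in> Arr C" by fact
    show "(I', \<phi>s) \<in> T (Cod C \<pi>)" by fact
    show "\<forall>i\<in>I'. Comp C (\<rho> j) (\<iota> i) \<in> hom C (Dom C (\<phi>s i)) (Dom C \<pi>) \<and>
        Comp C \<pi> (Comp C (\<rho> j) (\<iota> i)) = \<phi>s i"
    proof
      fix i assume i: "i \<in> I'"
      have ii: "\<iota> i \<in> hom C (Dom C (\<phi>s i)) Cp" using cp i unfolding is_coproduct_def by auto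
      have "Comp C (\<rho> j) (\<iota> i) \<in> hom C (Dom C (\<phi>s i)) (Dom C \<pi>)"
        using comp_hom[OF cat ii rj(1)] .
      moreover have "Comp C \<pi> (Comp C (\<rho> j) (\<iota> i)) = \<phi>s i"
        using comp_assoc[OF cat ii rj(1) pih] rj(2) phi i by simp
      ultimately show "Comp C (\<rho> j) (\<iota> i) \<in> hom C (Dom C (\<phi>s i)) (Dom C \<pi>) \<and>
        Comp C \<pi> (Comp C (\<rho> j) (\<iota> i)) = \<phi>s i" by blast
    qed
  qed
qed

lemma ref2:
  assumes cat: "category C" and gt: "grothendieck_topology C T"
    and sg: "singletonizable C T"
  shows "refines C T (Sing C T)"
  unfolding refines_def
proof (intro allI impI)
  fix \<pi> assume "universal C \<pi> \<and> locally_split C T \<pi>"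
  then have pa: "\<pi> \<in> Arr C" and ls: "locally_split C T \<pi>"
    unfolding universal_def by auto
  from ls obtain I \<phi> \<rho> where c: "(I, \<phi>) \<in> T (Cod C \<pi>)" and
    r: "\<forall>i \<in> I. \<rho> i \<in> hom C (Dom C (\<phi> i)) (Dom C \<pi>) \<and> Comp C \<pi> (\<rho> i) = \<phi> i"
    unfolding locally_split_def by blast
  define X where "X = Cod C \<pi>"
  have X: "X \<in> Obj C" "Dom C \<pi> \<in> Obj C" using pa cat unfolding category_def X_def by auto
  have pih: "\<pi> \<in> hom C (Dom C \<pi>) X" using pa unfolding hom_def X_def by auto
  have phh: "\<forall>i \<in> I. \<phi> i \<in> hom C (Dom C (\<phi> i)) X"
    using gt X c unfolding grothendieck_topology_def hom_def X_def by fastforce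
  obtain Cp \<iota> where cp: "is_coproduct C I (\<lambda>i. Dom C (\<phi> i)) Cp \<iota>"
    using sg X c unfolding singletonizable_def has_coproduct_def X_def by fastforce
  obtain h where h: "h \<in> hom C Cp X" "\<forall>i \<in> I. Comp C h (\<iota> i) = \<phi> i"
    and hu: "\<And>h'. h' \<in> hom C Cp X \<Longrightarrow> \<forall>i \<in> I. Comp C h' (\<iota> i) = \<phi> i \<Longrightarrow> h' = h"
    using cp X phh unfolding is_coproduct_def by metis
  obtain rr where rr: "rr \<in> hom C Cp (Dom C \<pi>)" "\<forall>i \<in> I. Comp C rr (\<iota> i) = \<rho> i"
    using cp X r unfolding is_coproduct_def by metis
  have cpobj: "Cp \<in> Obj C" using cp unfolding is_coproduct_def by auto
  have prh: "Comp C \<pi> rr \<in> hom C Cp X" using comp_hom[OF cat rr(1) pih] .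
  have "\<forall>i \<in> I. Comp C (Comp C \<pi> rr) (\<iota> i) = \<phi> i"
  proof
    fix i assume i: "i \<in> I"
    have ii: "\<iota> i \<in> hom C (Dom C (\<phi> i)) Cp" using cp i unfolding is_coproduct_def by auto
    show "Comp C (Comp C \<pi> rr) (\<iota> i) = \<phi> i"
      using comp_assoc[OF cat ii rr(1) pih] rr(2) r i by simp
  qed
  then have eq: "Comp C \<pi> rr = h" using hu prh by blast
  have sc: "({undefined}, \<lambda>_. h) \<in> Sing C T X"
    unfolding Sing_def using c cp h X_def by blast
  show "locally_split C (Sing C T) \<pi>"
    unfolding locally_split_def
  proof (intro conjI exI)
    show "\<pi> \<in> Arr C" by fact
    show "({undefined}, \<lambda>_. h) \<in> Sing C T (Cod C \<pi>)" using sc X_def by simp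
    show "\<forall>i\<in>{undefined}. (\<lambda>_. rr) i \<in> hom C (Dom C ((\<lambda>_. h) i)) (Dom C \<pi>) \<and>
          Comp C \<pi> ((\<lambda>_. rr) i) = (\<lambda>_. h) i"
      using rr(1) h(1) eq unfolding hom_def by auto
  qed
qed

theorem mainTheorem7:
  fixes C :: "('o, 'm) cat" and T :: "('i, 'o, 'm) topology"
  assumes "extensive C TYPE('i)"
    and "grothendieck_topology C T"
    and "singletonizable C T"
  shows "top_equiv C (Sing C T) T"
proof -
  have cat: "category C" using assms(1) unfolding extensive_def by auto
  show ?thesis unfolding top_equiv_def
    using ref1[OF cat] ref2[OF cat assms(2,3)] by blast
qed

end
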